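(* Let $(X,Y,\eta,\mu,\psi,\epsilon,\delta,\phi)$ be a left Frobenius pair in a monoidal category $(\mathfrak{C},\otimes,\mathbbm{1})$, and set $\alpha=\phi\circ\eta\colon\mathbbm{1}\to Y\otimes X$ and $\beta=\epsilon\circ\psi\colon X\otimes Y\to\mathbbm{1}$. Then \[ (\beta\otimes X)\circ(X\otimes\alpha)=\mathrm{id}_X \quad\text{and}\quad (Y\otimes\beta)\circ(\alpha\otimes Y)=\mathrm{id}_Y, \] so $X$ is left dualizable with dual $Y$. Consequently, for all objects $U,V$ of $\mathfrak{C}$ there are bijections, natural in $U$ and $V$, \[ \lambda\colon \operatorname{Hom}_{\mathfrak{C}}(X\otimes U,V)\to\operatorname{Hom}_{\mathfrak{C}}(U,Y\otimes V),\quad \lambda(f)=(Y\otimes f)\circ(\phi\eta\otimes U), \] with inverse $g\mapsto(\epsilon\psi\otimes V)\circ(X\otimes g)$, and \[ \rho\colon \operatorname{Hom}_{\mathfrak{C}}(U\otimes Y,V)\to\operatorname{Hom}_{\mathfrak{C}}(U,V\otimes X),\quad \rho(f)=(f\otimes X)\circ(U\otimes\phi\eta), \] with inverse $g\mapsto(V\otimes\epsilon\psi)\circ(g\otimes Y)$.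
   Context: Throughout, $(\mathfrak{C},\otimes,\mathbbm{1})$ is a monoidal category; associativity and unit isomorphisms are suppressed (identifying $\mathbbm{1}\otimes A=A=A\otimes\mathbbm{1}$). A \emph{left Frobenius pair} in $\mathfrak{C}$ consists of objects $X,Y$ and morphisms $\epsilon\colon Y\to\mathbbm{1}$, $\eta\colon\mathbbm{1}\to X$, $\delta\colon Y\to Y\otimes Y$, $\mu\colon X\otimes X\to X$, $\phi\colon X\to Y\otimes X$, $\psi\colon X\otimes Y\to Y$ such that: (1a) $(X,\eta,\mu)$ is an associative unital monoid: $\mu(\mu\otimes X)=\mu(X\otimes\mu)$, $\mu(\eta\otimes X)=\mathrm{id}_X=\mu(X\otimes\eta)$; (1b) $(Y,\epsilon,\delta)$ is a coassociative counital comonoid: $(\delta\otimes Y)\delta=(Y\otimes\delta)\delta$, $(\epsilon\otimes Y)\delta=\mathrm{id}_Y=(Y\otimes\epsilon)\delta$; (2a) $\psi$ is a left $X$-module structure on $Y$: $\psi(\mu\otimes Y)=\psi(X\otimes\psi)$, $\psi(\eta\otimes Y)=\mathrm{id}_Y$; (2b) $\phi$ is a left $Y$-comodule structure on $X$: $(\delta\otimes X)\phi=(Y\otimes\phi)\phi$, $(\epsilon\otimes X)\phi=\mathrm{id}_X$; (3a) $\phi$ is a left $X$-module map: $\phi\circ\mu=(\psi\otimes X)\circ(X\otimes\phi)$; (3b) $\psi$ is a left $Y$-comodule map: $\delta\circ\psi=(Y\otimes\psi)\circ(\phi\otimes Y)$. *)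

theory Defs
  imports Main
begin

text \<open>Associativity and unit isomorphisms are
suppressed in the paper (identifying 1 (x) A = A = A (x) 1 and bracketings),
so we model the monoidal category as a strict one. Every element of the
morphism type is an arrow with a domain and codomain; composition
Comp C g f means g after f and is only constrained when Cod f = Dom g.\<close>

record ('o, 'm) moncat =
  Dom  :: "'m \<Rightarrow> 'o"
  Cod  :: "'m \<Rightarrow> 'o"
  Comp :: "'m \<Rightarrow> 'm \<Rightarrow> 'm"
  Idm  :: "'o \<Rightarrow> 'm"
  TenO :: "'o \<Rightarrow> 'o \<Rightarrow> 'o"
  TenM :: "'m \<Rightarrow> 'm \<Rightarrow> 'm"
  Unit :: "'o"

definition Hom :: "('o, 'm, 'z) moncat_scheme \<Rightarrow> 'o \<Rightarrow> 'o \<Rightarrow> 'm set" where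
  "Hom C A B = {f. Dom C f = A \<and> Cod C f = B}"

definition strict_monoidal_category :: "('o, 'm, 'z) moncat_scheme \<Rightarrow> bool" where
  "strict_monoidal_category C \<longleftrightarrow>
     \<comment> \<open>category axioms\<close>
     (\<forall>A. Dom C (Idm C A) = A \<and> Cod C (Idm C A) = A) \<and>
     (\<forall>f g. Cod C f = Dom C g \<longrightarrow> Dom C (Comp C g f) = Dom C f \<and> Cod C (Comp C g f) = Cod C g) \<and>
     (\<forall>f g h. Cod C f = Dom C g \<and> Cod C g = Dom C h \<longrightarrow>
        Comp C h (Comp C g f) = Comp C (Comp C h g) f) \<and>
     (\<forall>f. Comp C (Idm C (Cod C f)) f = f \<and> Comp C f (Idm C (Dom C f)) = f) \<and>
     \<comment> \<open>tensor is a bifunctor\<close>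
     (\<forall>f g. Dom C (TenM C f g) = TenO C (Dom C f) (Dom C g) \<and>
            Cod C (TenM C f g) = TenO C (Cod C f) (Cod C g)) \<and>
     (\<forall>A B. TenM C (Idm C A) (Idm C B) = Idm C (TenO C A B)) \<and>
     (\<forall>f g f' g'. Cod C f = Dom C g \<and> Cod C f' = Dom C g' \<longrightarrow>
        TenM C (Comp C g f) (Comp C g' f') = Comp C (TenM C g g') (TenM C f f')) \<and>
     \<comment> \<open>strict associativity and unitality\<close>
     (\<forall>A B D. TenO C (TenO C A B) D = TenO C A (TenO C B D)) \<and>
     (\<forall>f g h. TenM C (TenM C f g) h = TenM C f (TenM C g h)) \<and>
     (\<forall>A. TenO C (Unit C) A = A \<and> TenO C A (Unit C) = A) \<and>
     (\<forall>f. TenM C (Idm C (Unit C)) f = f \<and> TenM C f (Idm C (Unit C)) = f)"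

text \<open>Left Frobenius pair (X, Y, eta, mu, psi, epsilon, delta, phi).
Whiskering "f (x) A" means TenM C f (Idm C A).\<close>

definition left_frobenius_pair ::
  "('o, 'm, 'z) moncat_scheme \<Rightarrow> 'o \<Rightarrow> 'o \<Rightarrow> 'm \<Rightarrow> 'm \<Rightarrow> 'm \<Rightarrow> 'm \<Rightarrow> 'm \<Rightarrow> 'm \<Rightarrow> bool" where
  "left_frobenius_pair C X Y \<epsilon> \<eta> \<delta> \<mu> \<phi> \<psi> \<longleftrightarrow>
     \<epsilon> \<in> Hom C Y (Unit C) \<and> \<eta> \<in> Hom C (Unit C) X \<and>
     \<delta> \<in> Hom C Y (TenO C Y Y) \<and> \<mu> \<in> Hom C (TenO C X X) X \<and>
     \<phi> \<in> Hom C X (TenO C Y X) \<and> \<psi> \<in> Hom C (TenO C X Y) Y \<and>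
     \<comment> \<open>(1a)\<close>
     Comp C \<mu> (TenM C \<mu> (Idm C X)) = Comp C \<mu> (TenM C (Idm C X) \<mu>) \<and>
     Comp C \<mu> (TenM C \<eta> (Idm C X)) = Idm C X \<and>
     Comp C \<mu> (TenM C (Idm C X) \<eta>) = Idm C X \<and>
     \<comment> \<open>(1b)\<close>
     Comp C (TenM C \<delta> (Idm C Y)) \<delta> = Comp C (TenM C (Idm C Y) \<delta>) \<delta> \<and>
     Comp C (TenM C \<epsilon> (Idm C Y)) \<delta> = Idm C Y \<and>
     Comp C (TenM C (Idm C Y) \<epsilon>) \<delta> = Idm C Y \<and>
     \<comment> \<open>(2a)\<close>
     Comp C \<psi> (TenM C \<mu> (Idm C Y)) = Comp C \<psi> (TenM C (Idm C X) \<psi>) \<and>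
     Comp C \<psi> (TenM C \<eta> (Idm C Y)) = Idm C Y \<and>
     \<comment> \<open>(2b)\<close>
     Comp C (TenM C \<delta> (Idm C X)) \<phi> = Comp C (TenM C (Idm C Y) \<phi>) \<phi> \<and>
     Comp C (TenM C \<epsilon> (Idm C X)) \<phi> = Idm C X \<and>
     \<comment> \<open>(3a)\<close>
     Comp C \<phi> \<mu> = Comp C (TenM C \<psi> (Idm C X)) (TenM C (Idm C X) \<phi>) \<and>
     \<comment> \<open>(3b)\<close>
     Comp C \<delta> \<psi> = Comp C (TenM C (Idm C Y) \<psi>) (TenM C \<phi> (Idm C Y))"

end

theory Submission imports Defs begin

locale smc = fixes C :: "('o, 'm, 'z) moncat_scheme"
  assumes smc: "strict_monoidal_category C"
begin
abbreviation "cp \<equiv> Comp C"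
abbreviation "tm \<equiv> TenM C"
abbreviation "ii \<equiv> Idm C"
abbreviation "to \<equiv> TenO C"
abbreviation "dm \<equiv> Dom C"
abbreviation "cd \<equiv> Cod C"

lemma dom_id[simp]: "dm (ii A) = A" and cod_id[simp]: "cd (ii A) = A"
  using smc unfolding strict_monoidal_category_def by auto
lemma dom_cp[simp]: "cd f = dm g \<Longrightarrow> dm (cp g f) = dm f"
  and cod_cp[simp]: "cd f = dm g \<Longrightarrow> cd (cp g f) = cd g"
  using smc unfolding strict_monoidal_category_def by auto
lemma assoc: "cd f = dm g \<Longrightarrow> cd g = dm h \<Longrightarrow> cp h (cp g f) = cp (cp h g) f"
  using smc unfolding strict_monoidal_category_def by auto
lemma idl[simp]: "cp (ii (cd f)) f = f" and idr[simp]: "cp f (ii (dm f)) = f"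
  using smc unfolding strict_monoidal_category_def by auto
lemma idl'[simp]: "cd f = A \<Longrightarrow> cp (ii A) f = f" and idr'[simp]: "dm f = A \<Longrightarrow> cp f (ii A) = f"
  by auto
lemma dom_tm[simp]: "dm (tm f g) = to (dm f) (dm g)" and cod_tm[simp]: "cd (tm f g) = to (cd f) (cd g)"
  using smc unfolding strict_monoidal_category_def by auto
lemma tm_id[simp]: "tm (ii A) (ii B) = ii (to A B)"
  using smc unfolding strict_monoidal_category_def by auto
lemma tm_cp: "cd f = dm g \<Longrightarrow> cd f' = dm g' \<Longrightarrow> tm (cp g f) (cp g' f') = cp (tm g g') (tm f f')"
  using smc unfolding strict_monoidal_category_def by auto
lemma to_assoc[simp]: "to (to A B) D = to A (to B D)"
  using smc unfolding strict_monoidal_category_def by auto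
lemma tm_assoc: "tm (tm f g) h = tm f (tm g h)"
  using smc unfolding strict_monoidal_category_def by auto
lemma tm_idto[simp]: "tm (ii (to A B)) f = tm (ii A) (tm (ii B) f)"
  by (metis tm_assoc tm_id)
lemma to_unit[simp]: "to (Unit C) A = A" "to A (Unit C) = A"
  using smc unfolding strict_monoidal_category_def by auto
lemma tm_unit[simp]: "tm (ii (Unit C)) f = f" "tm f (ii (Unit C)) = f"
  using smc unfolding strict_monoidal_category_def by auto

lemma xch1: "tm f g = cp (tm f (ii (cd g))) (tm (ii (dm f)) g)"
  using tm_cp[of "ii (dm f)" f g "ii (cd g)"] by simp
lemma xch2: "tm f g = cp (tm (ii (cd f)) g) (tm f (ii (dm g)))"
  using tm_cp[of f "ii (cd f)" "ii (dm g)" g] by simp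
lemma wr: "cd f = dm g \<Longrightarrow> tm (cp g f) (ii A) = cp (tm g (ii A)) (tm f (ii A))"
  using tm_cp[of f g "ii A" "ii A"] by simp
lemma wl: "cd f = dm g \<Longrightarrow> tm (ii A) (cp g f) = cp (tm (ii A) g) (tm (ii A) f)"
  using tm_cp[of "ii A" "ii A" f g] by simp

lemma duality:
  assumes a: "dm \<alpha> = Unit C" "cd \<alpha> = to Y X" and b: "dm \<beta> = to X Y" "cd \<beta> = Unit C"
    and z1: "cp (tm \<beta> (ii X)) (tm (ii X) \<alpha>) = ii X"
    and z2: "cp (tm (ii Y) \<beta>) (tm \<alpha> (ii Y)) = ii Y"
    and f: "dm f = to X U" "cd f = V"
  shows "cp (tm \<beta> (ii V)) (tm (ii X) (cp (tm (ii Y) f) (tm \<alpha> (ii U)))) = f"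
proof -
  have "tm (ii X) (cp (tm (ii Y) f) (tm \<alpha> (ii U))) = cp (tm (ii (to X Y)) f) (tm (tm (ii X) \<alpha>) (ii U))"
    using wl[of "tm \<alpha> (ii U)" "tm (ii Y) f" X] a f by (simp add: tm_assoc)
  moreover have "cp (tm \<beta> (ii V)) (tm (ii (to X Y)) f) = cp f (tm (tm \<beta> (ii X)) (ii U))"
    using xch2[of \<beta> f] xch1[of \<beta> f] b f by (simp add: tm_assoc)
  ultimately have "cp (tm \<beta> (ii V)) (tm (ii X) (cp (tm (ii Y) f) (tm \<alpha> (ii U))))
     = cp (cp f (tm (tm \<beta> (ii X)) (ii U))) (tm (tm (ii X) \<alpha>) (ii U))"
    using assoc[of "tm (tm (ii X) \<alpha>) (ii U)" "tm (ii (to X Y)) f" "tm \<beta> (ii V)"] a b f by simp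
  also have "\<dots> = cp f (tm (cp (tm \<beta> (ii X)) (tm (ii X) \<alpha>)) (ii U))"
    using assoc[of "tm (tm (ii X) \<alpha>) (ii U)" "tm (tm \<beta> (ii X)) (ii U)" f] wr[of "tm (ii X) \<alpha>" "tm \<beta> (ii X)" U] a b f by simp
  also have "\<dots> = f" using z1 f by simp
  finally show ?thesis .
qed

lemma duality2:
  assumes a: "dm \<alpha> = Unit C" "cd \<alpha> = to Y X" and b: "dm \<beta> = to X Y" "cd \<beta> = Unit C"
    and z2: "cp (tm (ii Y) \<beta>) (tm \<alpha> (ii Y)) = ii Y"
    and g: "dm g = U" "cd g = to Y V"
  shows "cp (tm (ii Y) (cp (tm \<beta> (ii V)) (tm (ii X) g))) (tm \<alpha> (ii U)) = g"
proof -
  have e1: "tm (ii Y) (cp (tm \<beta> (ii V)) (tm (ii X) g)) = cp (tm (tm (ii Y) \<beta>) (ii V)) (tm (ii (to Y X)) g)"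
    using wl[of "tm (ii X) g" "tm \<beta> (ii V)" Y] b g by (simp add: tm_assoc)
  have e2: "cp (tm (ii (to Y X)) g) (tm \<alpha> (ii U)) = cp (tm (tm \<alpha> (ii Y)) (ii V)) g"
    using xch2[of \<alpha> g] xch1[of \<alpha> g] a g by (simp add: tm_assoc)
  have "cp (tm (ii Y) (cp (tm \<beta> (ii V)) (tm (ii X) g))) (tm \<alpha> (ii U))
     = cp (tm (tm (ii Y) \<beta>) (ii V)) (cp (tm (ii (to Y X)) g) (tm \<alpha> (ii U)))"
    unfolding e1 using assoc[of "tm \<alpha> (ii U)" "tm (ii (to Y X)) g" "tm (tm (ii Y) \<beta>) (ii V)"] a b g
    by (simp add: tm_assoc)
  also have "\<dots> = cp (tm (cp (tm (ii Y) \<beta>) (tm \<alpha> (ii Y))) (ii V)) g"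
    unfolding e2 using assoc[of g "tm (tm \<alpha> (ii Y)) (ii V)" "tm (tm (ii Y) \<beta>) (ii V)"]
      wr[of "tm \<alpha> (ii Y)" "tm (ii Y) \<beta>" V] a b g by (simp add: tm_assoc)
  also have "\<dots> = g" using z2 g by simp
  finally show ?thesis .
qed

lemma duality3:
  assumes a: "dm \<alpha> = Unit C" "cd \<alpha> = to Y X" and b: "dm \<beta> = to X Y" "cd \<beta> = Unit C"
    and z2: "cp (tm (ii Y) \<beta>) (tm \<alpha> (ii Y)) = ii Y"
    and f: "dm f = to U Y" "cd f = V"
  shows "cp (tm (ii V) \<beta>) (tm (cp (tm f (ii X)) (tm (ii U) \<alpha>)) (ii Y)) = f"
proof -
  have e1: "tm (cp (tm f (ii X)) (tm (ii U) \<alpha>)) (ii Y) = cp (tm f (ii (to X Y))) (tm (ii U) (tm \<alpha> (ii Y)))"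
    using wr[of "tm (ii U) \<alpha>" "tm f (ii X)" Y] a f by (simp add: tm_assoc)
  have e2: "cp (tm (ii V) \<beta>) (tm f (ii (to X Y))) = cp f (tm (ii U) (tm (ii Y) \<beta>))"
    using xch2[of f \<beta>] xch1[of f \<beta>] b f by (simp add: tm_assoc)
  have "cp (tm (ii V) \<beta>) (tm (cp (tm f (ii X)) (tm (ii U) \<alpha>)) (ii Y))
     = cp (cp f (tm (ii U) (tm (ii Y) \<beta>))) (tm (ii U) (tm \<alpha> (ii Y)))"
    unfolding e1 e2[symmetric] using assoc[of "tm (ii U) (tm \<alpha> (ii Y))" "tm f (ii (to X Y))" "tm (ii V) \<beta>"] a b f
    by (simp add: tm_assoc)
  also have "\<dots> = cp f (tm (ii U) (cp (tm (ii Y) \<beta>) (tm \<alpha> (ii Y))))"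
    using assoc[of "tm (ii U) (tm \<alpha> (ii Y))" "tm (ii U) (tm (ii Y) \<beta>)" f]
      wl[of "tm \<alpha> (ii Y)" "tm (ii Y) \<beta>" U] a b f by (simp add: tm_assoc)
  also have "\<dots> = f" using z2 f by simp
  finally show ?thesis .
qed

lemma duality4:
  assumes a: "dm \<alpha> = Unit C" "cd \<alpha> = to Y X" and b: "dm \<beta> = to X Y" "cd \<beta> = Unit C"
    and z1: "cp (tm \<beta> (ii X)) (tm (ii X) \<alpha>) = ii X"
    and g: "dm g = U" "cd g = to V X"
  shows "cp (tm (cp (tm (ii V) \<beta>) (tm g (ii Y))) (ii X)) (tm (ii U) \<alpha>) = g"
proof -
  have e1: "tm (cp (tm (ii V) \<beta>) (tm g (ii Y))) (ii X) = cp (tm (ii V) (tm \<beta> (ii X))) (tm g (ii (to Y X)))"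
    using wr[of "tm g (ii Y)" "tm (ii V) \<beta>" X] b g by (simp add: tm_assoc)
  have e2: "cp (tm g (ii (to Y X))) (tm (ii U) \<alpha>) = cp (tm (ii V) (tm (ii X) \<alpha>)) g"
    using xch2[of g \<alpha>] xch1[of g \<alpha>] a g by (simp add: tm_assoc)
  have "cp (tm (cp (tm (ii V) \<beta>) (tm g (ii Y))) (ii X)) (tm (ii U) \<alpha>)
     = cp (tm (ii V) (tm \<beta> (ii X))) (cp (tm g (ii (to Y X))) (tm (ii U) \<alpha>))"
    unfolding e1 using assoc[of "tm (ii U) \<alpha>" "tm g (ii (to Y X))" "tm (ii V) (tm \<beta> (ii X))"] a b g
    by (simp add: tm_assoc)
  also have "\<dots> = cp (tm (ii V) (cp (tm \<beta> (ii X)) (tm (ii X) \<alpha>))) g"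
    unfolding e2 using assoc[of g "tm (ii V) (tm (ii X) \<alpha>)" "tm (ii V) (tm \<beta> (ii X))"]
      wl[of "tm (ii X) \<alpha>" "tm \<beta> (ii X)" V] a b g by (simp add: tm_assoc)
  also have "\<dots> = g" using z1 g by simp
  finally show ?thesis .
qed

lemma nat_lam:
  assumes a: "dm \<alpha> = Unit C" "cd \<alpha> = to Y X"
    and u: "dm u = U'" "cd u = U" and v: "dm v = V" and f: "dm f = to X U" "cd f = V"
  shows "cp (tm (ii Y) (cp v (cp f (tm (ii X) u)))) (tm \<alpha> (ii U'))
        = cp (tm (ii Y) v) (cp (cp (tm (ii Y) f) (tm \<alpha> (ii U))) u)"
proof -
  have e0: "cp (tm (ii (to Y X)) u) (tm \<alpha> (ii U')) = cp (tm \<alpha> (ii U)) u"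
    using xch2[of \<alpha> u] xch1[of \<alpha> u] a u by simp
  have "tm (ii Y) (cp v (cp f (tm (ii X) u))) = cp (tm (ii Y) v) (cp (tm (ii Y) f) (tm (ii (to Y X)) u))"
    using wl[of "cp f (tm (ii X) u)" v Y] wl[of "tm (ii X) u" f Y] u v f by simp
  hence "cp (tm (ii Y) (cp v (cp f (tm (ii X) u)))) (tm \<alpha> (ii U'))
     = cp (tm (ii Y) v) (cp (tm (ii Y) f) (cp (tm (ii (to Y X)) u) (tm \<alpha> (ii U'))))"
    using assoc[of "tm \<alpha> (ii U')" "cp (tm (ii Y) f) (tm (ii (to Y X)) u)" "tm (ii Y) v"]
      assoc[of "tm \<alpha> (ii U')" "tm (ii (to Y X)) u" "tm (ii Y) f"] a u v f by simp
  also have "\<dots> = cp (tm (ii Y) v) (cp (cp (tm (ii Y) f) (tm \<alpha> (ii U))) u)"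
    unfolding e0 using assoc[of u "tm \<alpha> (ii U)" "tm (ii Y) f"] a u f by simp
  finally show ?thesis .
qed

lemma nat_rho:
  assumes a: "dm \<alpha> = Unit C" "cd \<alpha> = to Y X"
    and u: "dm u = U'" "cd u = U" and v: "dm v = V" and f: "dm f = to U Y" "cd f = V"
  shows "cp (tm (cp v (cp f (tm u (ii Y)))) (ii X)) (tm (ii U') \<alpha>)
        = cp (tm v (ii X)) (cp (cp (tm f (ii X)) (tm (ii U) \<alpha>)) u)"
proof -
  have e0: "cp (tm u (ii (to Y X))) (tm (ii U') \<alpha>) = cp (tm (ii U) \<alpha>) u"
    using xch2[of u \<alpha>] xch1[of u \<alpha>] a u by (simp add: tm_assoc)
  have "tm (cp v (cp f (tm u (ii Y)))) (ii X) = cp (tm v (ii X)) (cp (tm f (ii X)) (tm u (ii (to Y X))))"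
    using wr[of "cp f (tm u (ii Y))" v X] wr[of "tm u (ii Y)" f X] u v f by (simp add: tm_assoc)
  hence "cp (tm (cp v (cp f (tm u (ii Y)))) (ii X)) (tm (ii U') \<alpha>)
     = cp (tm v (ii X)) (cp (tm f (ii X)) (cp (tm u (ii (to Y X))) (tm (ii U') \<alpha>)))"
    using assoc[of "tm (ii U') \<alpha>" "cp (tm f (ii X)) (tm u (ii (to Y X)))" "tm v (ii X)"]
      assoc[of "tm (ii U') \<alpha>" "tm u (ii (to Y X))" "tm f (ii X)"] a u v f by simp
  also have "\<dots> = cp (tm v (ii X)) (cp (cp (tm f (ii X)) (tm (ii U) \<alpha>)) u)"
    unfolding e0 using assoc[of u "tm (ii U) \<alpha>" "tm f (ii X)"] a u f by simp
  finally show ?thesis .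
qed

lemma zig:
  assumes F: "left_frobenius_pair C X Y \<epsilon> \<eta> \<delta> \<mu> \<phi> \<psi>"
  shows "cp (tm (cp \<epsilon> \<psi>) (ii X)) (tm (ii X) (cp \<phi> \<eta>)) = ii X"
    "cp (tm (ii Y) (cp \<epsilon> \<psi>)) (tm (cp \<phi> \<eta>) (ii Y)) = ii Y"
proof -
  note D = F[unfolded left_frobenius_pair_def Hom_def, simplified]
  have "cp (tm (cp \<epsilon> \<psi>) (ii X)) (tm (ii X) (cp \<phi> \<eta>))
      = cp (cp (tm \<epsilon> (ii X)) (tm \<psi> (ii X))) (cp (tm (ii X) \<phi>) (tm (ii X) \<eta>))"
    using wl[of \<eta> \<phi> X] wr[of \<psi> \<epsilon> X] D by simp
  also have "\<dots> = cp (tm \<epsilon> (ii X)) (cp (cp (tm \<psi> (ii X)) (tm (ii X) \<phi>)) (tm (ii X) \<eta>))"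
    using assoc[of "cp (tm (ii X) \<phi>) (tm (ii X) \<eta>)" "tm \<psi> (ii X)" "tm \<epsilon> (ii X)"]
      assoc[of "tm (ii X) \<eta>" "tm (ii X) \<phi>" "tm \<psi> (ii X)"] D by simp
  also have "\<dots> = cp (tm \<epsilon> (ii X)) (cp \<phi> (cp \<mu> (tm (ii X) \<eta>)))"
    using D assoc[of "tm (ii X) \<eta>" \<mu> \<phi>] by simp
  also have "\<dots> = ii X" using D by simp
  finally show "cp (tm (cp \<epsilon> \<psi>) (ii X)) (tm (ii X) (cp \<phi> \<eta>)) = ii X" .
  have "cp (tm (ii Y) (cp \<epsilon> \<psi>)) (tm (cp \<phi> \<eta>) (ii Y))
      = cp (cp (tm (ii Y) \<epsilon>) (tm (ii Y) \<psi>)) (cp (tm \<phi> (ii Y)) (tm \<eta> (ii Y)))"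
    using wr[of \<eta> \<phi> Y] wl[of \<psi> \<epsilon> Y] D by simp
  also have "\<dots> = cp (tm (ii Y) \<epsilon>) (cp (cp (tm (ii Y) \<psi>) (tm \<phi> (ii Y))) (tm \<eta> (ii Y)))"
    using assoc[of "cp (tm \<phi> (ii Y)) (tm \<eta> (ii Y))" "tm (ii Y) \<psi>" "tm (ii Y) \<epsilon>"]
      assoc[of "tm \<eta> (ii Y)" "tm \<phi> (ii Y)" "tm (ii Y) \<psi>"] D by simp
  also have "\<dots> = cp (tm (ii Y) \<epsilon>) (cp \<delta> (cp \<psi> (tm \<eta> (ii Y))))"
    using D assoc[of "tm \<eta> (ii Y)" \<psi> \<delta>] by simp
  also have "\<dots> = ii Y" using D by simp
  finally show "cp (tm (ii Y) (cp \<epsilon> \<psi>)) (tm (cp \<phi> \<eta>) (ii Y)) = ii Y" .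
qed
end

theorem mainTheorem2:
  fixes C :: "('o, 'm, 'z) moncat_scheme"
    and X Y :: 'o and \<epsilon> \<eta> \<delta> \<mu> \<phi> \<psi> :: 'm
  assumes "strict_monoidal_category C"
    and "left_frobenius_pair C X Y \<epsilon> \<eta> \<delta> \<mu> \<phi> \<psi>"
  defines "\<alpha> \<equiv> Comp C \<phi> \<eta>"
    and "\<beta> \<equiv> Comp C \<epsilon> \<psi>"
    and "lam \<equiv> \<lambda>U f. Comp C (TenM C (Idm C Y) f) (TenM C (Comp C \<phi> \<eta>) (Idm C U))"
    and "lam_inv \<equiv> \<lambda>V g. Comp C (TenM C (Comp C \<epsilon> \<psi>) (Idm C V)) (TenM C (Idm C X) g)"
    and "rho \<equiv> \<lambda>U f. Comp C (TenM C f (Idm C X)) (TenM C (Idm C U) (Comp C \<phi> \<eta>))"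
    and "rho_inv \<equiv> \<lambda>V g. Comp C (TenM C (Idm C V) (Comp C \<epsilon> \<psi>)) (TenM C g (Idm C Y))"
  shows
    "Comp C (TenM C \<beta> (Idm C X)) (TenM C (Idm C X) \<alpha>) = Idm C X
     \<and> Comp C (TenM C (Idm C Y) \<beta>) (TenM C \<alpha> (Idm C Y)) = Idm C Y
     \<and> (\<forall>U V.
          bij_betw (lam U) (Hom C (TenO C X U) V) (Hom C U (TenO C Y V))
        \<and> (\<forall>f \<in> Hom C (TenO C X U) V. lam_inv V (lam U f) = f)
        \<and> (\<forall>g \<in> Hom C U (TenO C Y V). lam_inv V g \<in> Hom C (TenO C X U) V \<and> lam U (lam_inv V g) = g)
        \<and> bij_betw (rho U) (Hom C (TenO C U Y) V) (Hom C U (TenO C V X))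
        \<and> (\<forall>f \<in> Hom C (TenO C U Y) V. rho_inv V (rho U f) = f)
        \<and> (\<forall>g \<in> Hom C U (TenO C V X). rho_inv V g \<in> Hom C (TenO C U Y) V \<and> rho U (rho_inv V g) = g))
     \<and> (\<forall>U U' V V' u v f.
          u \<in> Hom C U' U \<longrightarrow> v \<in> Hom C V V' \<longrightarrow> f \<in> Hom C (TenO C X U) V \<longrightarrow>
          lam U' (Comp C v (Comp C f (TenM C (Idm C X) u)))
            = Comp C (TenM C (Idm C Y) v) (Comp C (lam U f) u))
     \<and> (\<forall>U U' V V' u v f.
          u \<in> Hom C U' U \<longrightarrow> v \<in> Hom C V V' \<longrightarrow> f \<in> Hom C (TenO C U Y) V \<longrightarrow>
          rho U' (Comp C v (Comp C f (TenM C u (Idm C Y))))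
            = Comp C (TenM C v (Idm C X)) (Comp C (rho U f) u))"
proof -
  interpret smc C by (rule smc.intro) (fact assms(1))
  note D = assms(2)[unfolded left_frobenius_pair_def Hom_def, simplified]
  have a: "dm \<alpha> = Unit C" "cd \<alpha> = to Y X" and b: "dm \<beta> = to X Y" "cd \<beta> = Unit C"
    unfolding \<alpha>_def \<beta>_def using D by auto
  have z1: "cp (tm \<beta> (ii X)) (tm (ii X) \<alpha>) = ii X" and z2: "cp (tm (ii Y) \<beta>) (tm \<alpha> (ii Y)) = ii Y"
    unfolding \<alpha>_def \<beta>_def using zig[OF assms(2)] by auto
  have L: "lam = (\<lambda>U f. cp (tm (ii Y) f) (tm \<alpha> (ii U)))" unfolding lam_def \<alpha>_def ..
  have Li: "lam_inv = (\<lambda>V g. cp (tm \<beta> (ii V)) (tm (ii X) g))" unfolding lam_inv_def \<beta>_def ..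
  have R: "rho = (\<lambda>U f. cp (tm f (ii X)) (tm (ii U) \<alpha>))" unfolding rho_def \<alpha>_def ..
  have Ri: "rho_inv = (\<lambda>V g. cp (tm (ii V) \<beta>) (tm g (ii Y)))" unfolding rho_inv_def \<beta>_def ..
  have P: "\<forall>U V.
          bij_betw (lam U) (Hom C (TenO C X U) V) (Hom C U (TenO C Y V))
        \<and> (\<forall>f \<in> Hom C (TenO C X U) V. lam_inv V (lam U f) = f)
        \<and> (\<forall>g \<in> Hom C U (TenO C Y V). lam_inv V g \<in> Hom C (TenO C X U) V \<and> lam U (lam_inv V g) = g)
        \<and> bij_betw (rho U) (Hom C (TenO C U Y) V) (Hom C U (TenO C V X))
        \<and> (\<forall>f \<in> Hom C (TenO C U Y) V. rho_inv V (rho U f) = f)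
        \<and> (\<forall>g \<in> Hom C U (TenO C V X). rho_inv V g \<in> Hom C (TenO C U Y) V \<and> rho U (rho_inv V g) = g)"
  proof (intro allI)
    fix U V
    have l1: "\<forall>f \<in> Hom C (TenO C X U) V. lam_inv V (lam U f) = f"
      unfolding L Li Hom_def using duality[OF a b z1 z2] by auto
    have l2: "\<forall>g \<in> Hom C U (TenO C Y V). lam_inv V g \<in> Hom C (TenO C X U) V \<and> lam U (lam_inv V g) = g"
      unfolding L Li Hom_def using duality2[OF a b z2] a b by auto
    have l3: "\<forall>f \<in> Hom C (TenO C X U) V. lam U f \<in> Hom C U (TenO C Y V)"
      unfolding L Hom_def using a by auto
    have r1: "\<forall>f \<in> Hom C (TenO C U Y) V. rho_inv V (rho U f) = f"
      unfolding R Ri Hom_def using duality3[OF a b z2] by auto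
    have r2: "\<forall>g \<in> Hom C U (TenO C V X). rho_inv V g \<in> Hom C (TenO C U Y) V \<and> rho U (rho_inv V g) = g"
      unfolding R Ri Hom_def using duality4[OF a b z1] a b by auto
    have r3: "\<forall>f \<in> Hom C (TenO C U Y) V. rho U f \<in> Hom C U (TenO C V X)"
      unfolding R Hom_def using a by auto
    have "bij_betw (lam U) (Hom C (TenO C X U) V) (Hom C U (TenO C Y V))"
      by (rule bij_betw_byWitness[where f'="lam_inv V"]) (use l1 l2 l3 in auto)
    moreover have "bij_betw (rho U) (Hom C (TenO C U Y) V) (Hom C U (TenO C V X))"
      by (rule bij_betw_byWitness[where f'="rho_inv V"]) (use r1 r2 r3 in auto)
    ultimately show "bij_betw (lam U) (Hom C (TenO C X U) V) (Hom C U (TenO C Y V))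
        \<and> (\<forall>f \<in> Hom C (TenO C X U) V. lam_inv V (lam U f) = f)
        \<and> (\<forall>g \<in> Hom C U (TenO C Y V). lam_inv V g \<in> Hom C (TenO C X U) V \<and> lam U (lam_inv V g) = g)
        \<and> bij_betw (rho U) (Hom C (TenO C U Y) V) (Hom C U (TenO C V X))
        \<and> (\<forall>f \<in> Hom C (TenO C U Y) V. rho_inv V (rho U f) = f)
        \<and> (\<forall>g \<in> Hom C U (TenO C V X). rho_inv V g \<in> Hom C (TenO C U Y) V \<and> rho U (rho_inv V g) = g)"
      using l1 l2 r1 r2 by blast
  qed
  have N1: "\<forall>U U' V V' u v f.
          u \<in> Hom C U' U \<longrightarrow> v \<in> Hom C V V' \<longrightarrow> f \<in> Hom C (TenO C X U) V \<longrightarrow>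
          lam U' (Comp C v (Comp C f (TenM C (Idm C X) u)))
            = Comp C (TenM C (Idm C Y) v) (Comp C (lam U f) u)"
    unfolding L Hom_def using nat_lam[OF a] by auto
  have N2: "\<forall>U U' V V' u v f.
          u \<in> Hom C U' U \<longrightarrow> v \<in> Hom C V V' \<longrightarrow> f \<in> Hom C (TenO C U Y) V \<longrightarrow>
          rho U' (Comp C v (Comp C f (TenM C u (Idm C Y))))
            = Comp C (TenM C v (Idm C X)) (Comp C (rho U f) u)"
    unfolding R Hom_def using nat_rho[OF a] by auto
  show ?thesis using z1 z2 P N1 N2 by blast
qed

end
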